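(* Let $K\subset\mathbb{R}^n$ and $C\subset\mathbb{R}^m$ be nonempty, convex, closed and bounded sets, and let $f,h:\mathbb{R}^n\times\mathbb{R}^m\to\mathbb{R}$ be continuous functions such that, for every $y\in K$, $f(y,\cdot)$ and $h(y,\cdot)$ are convex, and such that $f$ takes only positive values. Let $\varepsilon>0$, let $y_\varepsilon$ be an optimal solution of $(\mathcal{P}_\varepsilon)$, let $y^*$ be an optimal solution of $(\widetilde{\mathcal{P}})$, let $x^*\in\mathcal{S}(y^* )$, and let $\tilde x_\varepsilon\in\mathcal{S}_\varepsilon(y^* )$. Then for every $x_\varepsilon\in\mathcal{S}_\varepsilon(y_\varepsilon)$, $$f(y^*,\tilde x_\varepsilon)\le f(y_\varepsilon,x_\varepsilon)\le f(y^*,x^* ).$$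
   Context: $f^2=(f)^2$. For $y\in K$: $\mathcal{S}(y)=\operatorname{argmin}\{h(y,z)\mid z\in C\}$; for $\varepsilon>0$, $\mathcal{S}_\varepsilon(y)=\operatorname{argmin}\{h(y,z)+\varepsilon f^2(y,z)\mid z\in C\}$; $\widetilde{\mathcal{S}}(y)=\operatorname{argmin}\{f^2(y,z)\mid z\in\mathcal{S}(y)\}$. $(\mathcal{P}_\varepsilon)$: maximize $f(y,x)$ over $y\in K$, $x\in\mathcal{S}_\varepsilon(y)$; $y_\varepsilon\in K$ is optimal if $f(y_\varepsilon,x')\ge f(y,x)$ for all $x'\in\mathcal{S}_\varepsilon(y_\varepsilon)$, $y\in K$, $x\in\mathcal{S}_\varepsilon(y)$. $(\widetilde{\mathcal{P}})$: maximize $f(y,x)$ over $y\in K$, $x\in\widetilde{\mathcal{S}}(y)$; $y^*\in K$ is optimal if $f(y^*,x')\ge f(y,x)$ for all $x'\in\widetilde{\mathcal{S}}(y^* )$, $y\in K$, $x\in\widetilde{\mathcal{S}}(y)$. *)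

theory Defs
  imports "HOL-Analysis.Analysis"
begin

definition argmin_set :: "('x \<Rightarrow> real) \<Rightarrow> 'x set \<Rightarrow> 'x set" where
  "argmin_set g A = {z \<in> A. \<forall>z'\<in>A. g z \<le> g z'}"

definition Ssol :: "('y \<Rightarrow> 'x \<Rightarrow> real) \<Rightarrow> 'x set \<Rightarrow> 'y \<Rightarrow> 'x set" where
  "Ssol h C y = argmin_set (h y) C"

definition Seps :: "('y \<Rightarrow> 'x \<Rightarrow> real) \<Rightarrow> ('y \<Rightarrow> 'x \<Rightarrow> real) \<Rightarrow> 'x set \<Rightarrow> real \<Rightarrow> 'y \<Rightarrow> 'x set" where
  "Seps f h C \<epsilon> y = argmin_set (\<lambda>z. h y z + \<epsilon> * (f y z)^2) C"

definition Stilde :: "('y \<Rightarrow> 'x \<Rightarrow> real) \<Rightarrow> ('y \<Rightarrow> 'x \<Rightarrow> real) \<Rightarrow> 'x set \<Rightarrow> 'y \<Rightarrow> 'x set" where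
  "Stilde f h C y = argmin_set (\<lambda>z. (f y z)^2) (Ssol h C y)"

text \<open>Optimality of y for the problem max f(y,x), y in K, x in Sm(y) (pessimistic-style
  definition as in the paper).\<close>
definition optimal_for :: "('y \<Rightarrow> 'x \<Rightarrow> real) \<Rightarrow> 'y set \<Rightarrow> ('y \<Rightarrow> 'x set) \<Rightarrow> 'y \<Rightarrow> bool" where
  "optimal_for f K Sm y0 \<longleftrightarrow> y0 \<in> K \<and>
     (\<forall>x'\<in>Sm y0. \<forall>y\<in>K. \<forall>x\<in>Sm y. f y0 x' \<ge> f y x)"

end

theory Submission
  imports Defs
begin

lemma cont_slice:
  assumes "continuous_on UNIV (\<lambda>(y, x). g y x)"
  shows "continuous_on UNIV (g y)"
proof -
  have "continuous_on UNIV ((\<lambda>(y, x). g y x) \<circ> (\<lambda>x. (y, x)))"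
    by (rule continuous_on_compose[OF _ continuous_on_subset[OF assms]])
       (auto intro!: continuous_intros)
  then show ?thesis by (simp add: o_def)
qed

lemma argmin_nonempty:
  fixes g :: "'a::topological_space \<Rightarrow> real"
  assumes "compact A" "A \<noteq> {}" "continuous_on A g"
  shows "argmin_set g A \<noteq> {}"
  using continuous_attains_inf[OF assms] unfolding argmin_set_def by auto

lemma argmin_closed:
  fixes g :: "'a::{topological_space,t2_space} \<Rightarrow> real"
  assumes "closed A" "continuous_on UNIV g"
  shows "closed (argmin_set g A)"
proof -
  have "argmin_set g A = A \<inter> (\<Inter>z'\<in>A. {z. g z \<le> g z'})"
    unfolding argmin_set_def by auto
  moreover have "closed {z. g z \<le> g z'}" for z'
    using closed_Collect_le[OF assms(2) continuous_on_const] by simp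
  ultimately show ?thesis using assms(1) by (metis closed_INT closed_Int)
qed

theorem lemma4p3:
  fixes K :: "(real^'n) set" and C :: "(real^'m) set"
    and f h :: "real^'n \<Rightarrow> real^'m \<Rightarrow> real"
    and \<epsilon> :: real and y\<epsilon> ystar :: "real^'n" and xstar x\<epsilon>t :: "real^'m"
  assumes "K \<noteq> {}" "convex K" "closed K" "bounded K"
    and "C \<noteq> {}" "convex C" "closed C" "bounded C"
    and "continuous_on UNIV (\<lambda>(y, x). f y x)"
    and "continuous_on UNIV (\<lambda>(y, x). h y x)"
    and "\<forall>y\<in>K. convex_on UNIV (f y)"
    and "\<forall>y\<in>K. convex_on UNIV (h y)"
    and "\<forall>y x. f y x > 0"
    and "\<epsilon> > 0"
    and "optimal_for f K (Seps f h C \<epsilon>) y\<epsilon>"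
    and "optimal_for f K (Stilde f h C) ystar"
    and "xstar \<in> Ssol h C ystar"
    and "x\<epsilon>t \<in> Seps f h C \<epsilon> ystar"
  shows "\<forall>x\<epsilon> \<in> Seps f h C \<epsilon> y\<epsilon>.
           f ystar x\<epsilon>t \<le> f y\<epsilon> x\<epsilon> \<and> f y\<epsilon> x\<epsilon> \<le> f ystar xstar"
proof
  fix x\<epsilon> assume xe: "x\<epsilon> \<in> Seps f h C \<epsilon> y\<epsilon>"
  have yK: "ystar \<in> K" "y\<epsilon> \<in> K" using assms(15,16) unfolding optimal_for_def by auto
  have first: "f ystar x\<epsilon>t \<le> f y\<epsilon> x\<epsilon>"
    using assms(15) xe yK assms(18) unfolding optimal_for_def by auto
  have cC: "compact C" using assms(7,8) by (simp add: compact_eq_bounded_closed)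
  have St_ne: "Stilde f h C y \<noteq> {}" for y
  proof -
    have ch: "continuous_on UNIV (h y)" by (rule cont_slice[OF assms(10)])
    have cf: "continuous_on UNIV (f y)" by (rule cont_slice[OF assms(9)])
    have "Ssol h C y \<noteq> {}" unfolding Ssol_def
      by (rule argmin_nonempty[OF cC assms(5) continuous_on_subset[OF ch]]) auto
    moreover have "compact (Ssol h C y)"
    proof -
      have "closed (Ssol h C y)" unfolding Ssol_def by (rule argmin_closed[OF assms(7) ch])
      moreover have "Ssol h C y \<subseteq> C" unfolding Ssol_def argmin_set_def by auto
      ultimately show ?thesis using cC compact_Int_closed[of C "Ssol h C y"] by (simp add: Int_absorb1)
    qed
    ultimately show ?thesis unfolding Stilde_def
      by (intro argmin_nonempty) (auto intro!: continuous_intros continuous_on_subset[OF cf])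
  qed
  obtain x' where x': "x' \<in> Stilde f h C y\<epsilon>" using St_ne by blast
  obtain x'' where x'': "x'' \<in> Stilde f h C ystar" using St_ne by blast
  have x'S: "x' \<in> Ssol h C y\<epsilon>" "x' \<in> C" using x' unfolding Stilde_def Ssol_def argmin_set_def by auto
  have xeC: "x\<epsilon> \<in> C" and xemin: "h y\<epsilon> x\<epsilon> + \<epsilon> * (f y\<epsilon> x\<epsilon>)^2 \<le> h y\<epsilon> x' + \<epsilon> * (f y\<epsilon> x')^2"
    using xe x'S unfolding Seps_def argmin_set_def by auto
  have "h y\<epsilon> x' \<le> h y\<epsilon> x\<epsilon>" using x'S xeC unfolding Ssol_def argmin_set_def by auto
  with xemin have "\<epsilon> * (f y\<epsilon> x\<epsilon>)^2 \<le> \<epsilon> * (f y\<epsilon> x')^2" by linarith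
  hence "(f y\<epsilon> x\<epsilon>)^2 \<le> (f y\<epsilon> x')^2" using assms(14) by simp
  hence s1: "f y\<epsilon> x\<epsilon> \<le> f y\<epsilon> x'" using assms(13)
    by (meson less_imp_le power2_le_imp_le)
  have s2: "f y\<epsilon> x' \<le> f ystar x''" using assms(16) yK x' x'' unfolding optimal_for_def by auto
  have "(f ystar x'')^2 \<le> (f ystar xstar)^2" using x'' assms(17) unfolding Stilde_def argmin_set_def by auto
  hence s3: "f ystar x'' \<le> f ystar xstar" using assms(13)
    by (meson less_imp_le power2_le_imp_le)
  show "f ystar x\<epsilon>t \<le> f y\<epsilon> x\<epsilon> \<and> f y\<epsilon> x\<epsilon> \<le> f ystar xstar" using first s1 s2 s3 by linarith
qed

end
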